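(* Fix $s>0$ and let $\Phi_s(x)=(1+e^{-sx})^{-1}$ and $\phi_s(x)=\Phi_s'(x)=se^{-sx}/(1+e^{-sx})^2$. Let $f:\mathbb{R}^3\to\mathbb{R}$ be a signed distance function whose zero-level set is a smooth surface $\mathbb{S}$, and let $\mathbf{p}(t)=\mathbf{o}+t\mathbf{v}$, $t\ge0$, be a ray with unit direction $\mathbf{v}$. Define $\sigma(t)=\phi_s(f(\mathbf{p}(t)))$, $T(t)=\exp\left(-\int_0^t\sigma(u)\,\mathrm{d}u\right)$ and $w(t)=T(t)\sigma(t)$. Let $t^*>0$ satisfy $f(\mathbf{p}(t^* ))=0$, and suppose that near $t^*$ the surface is tangentially approximated by a planar patch, i.e. $\nabla f(\mathbf{p}(t))$ is constant for $t$ in a neighborhood of $t^*$. Then $\frac{\mathrm{d}w}{\mathrm{d}t}(t^* )=-T(t^* )\phi_s(0)^2<0$; in particular $w$ does not attain a local maximum at $t^*$. *)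

theory Defs
  imports "HOL-Analysis.Analysis"
begin

definition Phi_s :: "real \<Rightarrow> real \<Rightarrow> real" where
  "Phi_s s x = 1 / (1 + exp (- s * x))"

definition phi_s :: "real \<Rightarrow> real \<Rightarrow> real" where
  "phi_s s x = s * exp (- s * x) / (1 + exp (- s * x))^2"

definition is_sdf :: "(real^3 \<Rightarrow> real) \<Rightarrow> bool" where
  "is_sdf f \<longleftrightarrow> (\<exists>\<Omega>::(real^3) set. \<forall>x.
      f x = (if x \<in> \<Omega> then - infdist x (frontier \<Omega>) else infdist x (frontier \<Omega>)))"

definition ray :: "real^3 \<Rightarrow> real^3 \<Rightarrow> real \<Rightarrow> real^3" where
  "ray x0 v t = x0 + t *\<^sub>R v"

definition sigma :: "real \<Rightarrow> (real^3 \<Rightarrow> real) \<Rightarrow> real^3 \<Rightarrow> real^3 \<Rightarrow> real \<Rightarrow> real" where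
  "sigma s f x0 v t = phi_s s (f (ray x0 v t))"

definition transm :: "real \<Rightarrow> (real^3 \<Rightarrow> real) \<Rightarrow> real^3 \<Rightarrow> real^3 \<Rightarrow> real \<Rightarrow> real" where
  "transm s f x0 v t = exp (- integral {0..t} (sigma s f x0 v))"

definition weight :: "real \<Rightarrow> (real^3 \<Rightarrow> real) \<Rightarrow> real^3 \<Rightarrow> real^3 \<Rightarrow> real \<Rightarrow> real" where
  "weight s f x0 v t = transm s f x0 v t * sigma s f x0 v t"

end

theory Submission
  imports Defs
begin

lemma sdf_isCont:
  fixes f :: "real^3 \<Rightarrow> real"
  assumes "is_sdf f"
  shows "isCont f x"
proof -
  obtain \<Omega> :: "(real^3) set" where fd: "\<And>x. f x = (if x \<in> \<Omega> then - infdist x (frontier \<Omega>) else infdist x (frontier \<Omega>))"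
    using assms unfolding is_sdf_def by blast
  define d where "d = (\<lambda>y. infdist y (frontier \<Omega>))"
  have cd: "isCont d y" for y unfolding d_def by (intro continuous_intros)
  consider "x \<in> interior \<Omega>" | "x \<in> interior (- \<Omega>)" | "x \<in> frontier \<Omega>"
    by (metis ComplI DiffI closure_interior frontier_def)
  then show ?thesis
  proof cases
    case 1
    have "eventually (\<lambda>y. y \<in> interior \<Omega>) (nhds x)"
      using 1 by (intro eventually_nhds_in_open) auto
    then have "eventually (\<lambda>y. f y = - d y) (nhds x)"
      by eventually_elim (use interior_subset in \<open>auto simp: fd d_def\<close>)
    moreover have "isCont (\<lambda>y. - d y) x" using cd by (intro continuous_intros)
    ultimately show ?thesis using isCont_cong[of f "\<lambda>y. - d y" x] by blast
  next
    case 2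
    have "eventually (\<lambda>y. y \<in> interior (- \<Omega>)) (nhds x)"
      using 2 by (intro eventually_nhds_in_open) auto
    then have "eventually (\<lambda>y. f y = d y) (nhds x)"
      by eventually_elim (use interior_subset in \<open>auto simp: fd d_def\<close>)
    then show ?thesis using isCont_cong[of f d x] cd by blast
  next
    case 3
    have fx: "f x = 0" using 3 by (simp add: fd)
    have "(d \<longlongrightarrow> d x) (at x)" using cd by (simp add: isCont_def)
    moreover have "d x = 0" using 3 by (simp add: d_def)
    moreover have "(\<lambda>y. \<bar>f y\<bar>) = d" unfolding d_def by (rule ext) (simp only: fd, simp add: infdist_nonneg)
    ultimately have "((\<lambda>y. \<bar>f y\<bar>) \<longlongrightarrow> 0) (at x)"
      by simp
    then have "(f \<longlongrightarrow> 0) (at x)" by (simp add: tendsto_rabs_zero_iff)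
    then show ?thesis using fx by (simp add: isCont_def)
  qed
qed

lemma onepexp: "1 + exp (z::real) \<noteq> 0"
  using exp_gt_zero[of z] by linarith

lemma phi_deriv0:
  assumes "s > 0"
  shows "(phi_s s has_real_derivative 0) (at 0)"
proof -
  have "((\<lambda>x. s * exp (- s * x) / (1 + exp (- s * x))^2) has_real_derivative
     ((s * (exp (- s * 0) * (- s))) * (1 + exp (- s * 0))^2 - s * exp (- s * 0) * (2 * (1 + exp (- s * 0)) * (exp (- s * 0) * (- s)))) / ((1 + exp (- s * 0))^2)^2) (at 0)"
    by (auto intro!: derivative_eq_intros simp: power2_eq_square add_pos_pos)
  then show ?thesis unfolding phi_s_def[abs_def] by (simp add: algebra_simps)
qed

theorem mainTheorem2:
  fixes s :: real and f :: "real^3 \<Rightarrow> real" and x0 v :: "real^3" and tstar :: real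
  assumes "s > 0"
    and "is_sdf f"
    and "norm v = 1"
    and "tstar > 0"
    and "f (ray x0 v tstar) = 0"
    and "\<exists>\<epsilon>>0. \<exists>g. \<forall>t. \<bar>t - tstar\<bar> < \<epsilon> \<longrightarrow> (GDERIV f (ray x0 v t) :> g)"
  shows "(weight s f x0 v has_real_derivative (- transm s f x0 v tstar * (phi_s s 0)^2)) (at tstar)
    \<and> - transm s f x0 v tstar * (phi_s s 0)^2 < 0
    \<and> \<not> (\<exists>\<epsilon>>0. \<forall>t. \<bar>t - tstar\<bar> < \<epsilon> \<longrightarrow> weight s f x0 v t \<le> weight s f x0 v tstar)"
proof -
  obtain \<epsilon> g where e: "\<epsilon> > 0" and g0: "\<forall>t. \<bar>t - tstar\<bar> < \<epsilon> \<longrightarrow> (GDERIV f (ray x0 v t) :> g)"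
    using assms(6) by blast
  have g: "GDERIV f (ray x0 v tstar) :> g" using g0 e by simp
  have cphi: "isCont (phi_s s) y" for y
    unfolding phi_s_def[abs_def] by (intro continuous_intros) (simp add: onepexp)
  have cray: "isCont (ray x0 v) t" for t unfolding ray_def[abs_def] by (intro continuous_intros)
  have csig: "isCont (sigma s f x0 v) t" for t
    unfolding sigma_def[abs_def]
    using continuous_at_compose[OF continuous_at_compose[OF cray sdf_isCont[OF assms(2)]] cphi]
    by (simp add: o_def)
  have cons: "continuous_on {0..tstar+1} (sigma s f x0 v)"
    using csig by (simp add: continuous_at_imp_continuous_on)
  have int_in: "tstar \<in> interior {0..tstar+1}" using assms(4) by simp
  have dI: "((\<lambda>t. integral {0..t} (sigma s f x0 v)) has_real_derivative sigma s f x0 v tstar) (at tstar)"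
    using integral_has_real_derivative[OF cons, of tstar] assms(4) at_within_interior[OF int_in] by simp
  have sig0: "sigma s f x0 v tstar = phi_s s 0" using assms(5) by (simp add: sigma_def)
  have dT: "(transm s f x0 v has_real_derivative transm s f x0 v tstar * (- phi_s s 0)) (at tstar)"
    unfolding transm_def[abs_def] using sig0
    by (auto intro!: derivative_eq_intros dI)
  have dray: "(ray x0 v has_derivative (\<lambda>h. h *\<^sub>R v)) (at tstar)"
    unfolding ray_def[abs_def] by (auto intro!: derivative_eq_intros)
  have df: "(f has_derivative (\<lambda>h. h \<bullet> g)) (at (ray x0 v tstar))"
    using g by (simp add: gderiv_def)
  have dh: "((\<lambda>t. f (ray x0 v t)) has_real_derivative g \<bullet> v) (at tstar)"
    using has_derivative_compose[OF dray df] apply (simp add: o_def inner_commute)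
    unfolding has_field_derivative_def
  proof -
    assume h: "((\<lambda>x. f (ray x0 v x)) has_derivative (\<lambda>x. x * (g \<bullet> v))) (at tstar)"
    have "(\<lambda>x. x * (g \<bullet> v)) = (*) (g \<bullet> v)" by (rule ext) simp
    with h show "((\<lambda>t. f (ray x0 v t)) has_derivative (*) (g \<bullet> v)) (at tstar)" by simp
  qed
  have dS: "(sigma s f x0 v has_real_derivative 0) (at tstar)"
    unfolding sigma_def[abs_def]
    using DERIV_chain2[OF _ dh, of "phi_s s" 0] phi_deriv0[OF assms(1)] assms(5) by simp
  have dW: "(weight s f x0 v has_real_derivative (- transm s f x0 v tstar * (phi_s s 0)^2)) (at tstar)"
  proof -
    have "(weight s f x0 v has_real_derivative transm s f x0 v tstar * 0 + (transm s f x0 v tstar * (- phi_s s 0)) * sigma s f x0 v tstar) (at tstar)"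
      unfolding weight_def[abs_def] by (rule DERIV_mult'[OF dT dS])
    then show ?thesis using sig0 by (simp add: power2_eq_square mult.assoc)
  qed
  have neg: "- transm s f x0 v tstar * (phi_s s 0)^2 < 0"
    using assms(1) by (simp add: transm_def phi_s_def)
  show ?thesis
  proof (intro conjI dW neg notI)
    assume "\<exists>\<epsilon>>0. \<forall>t. \<bar>t - tstar\<bar> < \<epsilon> \<longrightarrow> weight s f x0 v t \<le> weight s f x0 v tstar"
    then obtain d where "d > 0" "\<forall>t. \<bar>tstar - t\<bar> < d \<longrightarrow> weight s f x0 v t \<le> weight s f x0 v tstar"
      by (metis abs_minus_commute)
    from DERIV_local_max[OF dW this] neg show False by linarith
  qed
qed

end
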